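(* Let $N\ge2$ be an integer and $u=1/N$. For all real $\sigma\ge0$ and all $x\in[1/N,1]$, \[\Bigl|\sum_{k=0}^{\lfloor\sigma\rfloor}\hat F^k\varphi_0(x)-a(\sigma)\Bigr|\le\frac{N(N-1)}{2},\qquad\text{where } a(\sigma):=\frac{1}{\log N}\sum_{k=0}^{\lfloor\sigma\rfloor}\lambda\bigl(F^{-k}[1/N,1]\bigr).\]
   Context: $\lambda$ is Lebesgue measure; $F$ is the Farey map, $F(x)=x/(1-x)$ for $0\le x\le1/2$, $F(x)=(1-x)/x$ for $1/2<x\le1$. $\mu$ is the measure $d\mu=dx/x$ on $[0,1]$. $\hat F$ is the transfer operator of $F$ with respect to $\mu$, given explicitly by $\hat Ff(x)=\dfrac{f(x/(1+x))+x\,f(1/(1+x))}{1+x}$. $\varphi_0(x):=x$ on $[0,1]$. Note $a(\sigma)$ equals the $\mu$-average of $\sum_{k=0}^{\lfloor\sigma\rfloor}\hat F^k\varphi_0$ over $[1/N,1]$. *)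

theory Defs
  imports "HOL-Analysis.Analysis"
begin

definition farey :: "real \<Rightarrow> real" where
  "farey x = (if x \<le> 1/2 then x / (1 - x) else (1 - x) / x)"

text \<open>Transfer operator of the Farey map with respect to dx/x (explicit formula).\<close>
definition farey_transfer :: "(real \<Rightarrow> real) \<Rightarrow> real \<Rightarrow> real" where
  "farey_transfer f x = (f (x / (1 + x)) + x * f (1 / (1 + x))) / (1 + x)"

definition phi0 :: "real \<Rightarrow> real" where
  "phi0 x = x"

definition a_sigma :: "nat \<Rightarrow> real \<Rightarrow> real" where
  "a_sigma N \<sigma> = (1 / ln (real N)) *
     (\<Sum>k=0..nat \<lfloor>\<sigma>\<rfloor>. measure lborel {x \<in> {0..1}. (farey ^^ k) x \<in> {1 / real N..1}})"

end

theory Submission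
  imports Defs
begin


definition Tt :: "(real \<Rightarrow> real) \<Rightarrow> real \<Rightarrow> real" where
  "Tt V t = (t * V (t+1) + V (1 + 1/t)) / (t+1)"

definition G1 :: "(real \<Rightarrow> real) \<Rightarrow> (real \<Rightarrow> real) \<Rightarrow> real \<Rightarrow> real" where
  "G1 V V1 t = (V (t+1) - V (1+1/t)) / (t+1)^2 + t * V1 (t+1) / (t+1) - V1 (1+1/t) / (t^2*(t+1))"

definition G2 :: "(real \<Rightarrow> real) \<Rightarrow> (real \<Rightarrow> real) \<Rightarrow> (real \<Rightarrow> real) \<Rightarrow> real \<Rightarrow> real" where
  "G2 V V1 V2 t = (V1 (t+1) + V1 (1+1/t) / t^2) / (t+1)^2 - 2 * (V (t+1) - V (1+1/t)) / (t+1)^3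
     + (V1 (t+1) / (t+1)^2 + t * V2 (t+1) / (t+1)) + (V2 (1+1/t) / (t^4*(t+1))
     + V1 (1+1/t) * (3*t+2) / (t^3*(t+1)^2))"

definition invV :: "(real \<Rightarrow> real) \<Rightarrow> (real \<Rightarrow> real) \<Rightarrow> (real \<Rightarrow> real) \<Rightarrow> bool" where
  "invV V V1 V2 \<longleftrightarrow> (\<forall>u>1/2. (V has_real_derivative V1 u) (at u) \<and> (V1 has_real_derivative V2 u) (at u))
     \<and> (\<forall>u\<ge>1. 0 \<le> V1 u \<and> V1 u \<le> 1 \<and> 0 \<le> V2 u)"

lemma chain_shift:
  assumes "\<forall>u>1/2. (V has_real_derivative V1 u) (at u)" "t > 1/2"
  shows "((\<lambda>s. V (s+1)) has_real_derivative V1 (t+1)) (at t)"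
proof -
  have a: "(V has_real_derivative V1 (t+1)) (at (t+1))" using assms by simp
  have "((\<lambda>s. V (s+1)) has_real_derivative V1 (t+1) * 1) (at t)"
    by (rule DERIV_chain2[where f=V and g="\<lambda>s. s+1", OF a]) (auto intro!: derivative_eq_intros)
  then show ?thesis by simp
qed

lemma chain_inv:
  assumes "\<forall>u>1/2. (V has_real_derivative V1 u) (at u)" "t > 1/2"
  shows "((\<lambda>s. V (1+1/s)) has_real_derivative - V1 (1+1/t) / t^2) (at t)"
proof -
  have "1 + 1/t > 1/2" using assms(2) by (simp add: add_pos_pos)
  then have a: "(V has_real_derivative V1 (1+1/t)) (at (1+1/t))" using assms by simp
  have b: "((\<lambda>s. 1 + 1/s) has_real_derivative - 1/t^2) (at t)"
    using assms(2) by (auto intro!: derivative_eq_intros simp: power2_eq_square)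
  have "((\<lambda>s. V (1+1/s)) has_real_derivative V1 (1+1/t) * (- 1/t^2)) (at t)"
    by (rule DERIV_chain2[OF a b])
  then show ?thesis by simp
qed

lemma alg_G1:
  fixes t u a b c d :: real
  assumes "t > 0" "u = t + 1"
  shows "((t * b + 1 * a + - c / t^2) * u - (t * a + d) * 1) / (u*u)
    = (a - d) / u^2 + t * b / u - c / (t^2*u)"
proof -
  have h: "t \<noteq> 0" "u \<noteq> 0" using assms by auto
  show ?thesis using h by (simp add: field_simps power2_eq_square) (simp add: assms(2) algebra_simps)
qed

lemma algA:
  fixes t u p q r :: real
  assumes "t > 0" "u = t + 1"
  shows "((p - - q / t^2) * u^2 - r * (2*u)) / (u^2 * u^2)
    = (p + q / t^2) / u^2 - 2 * r / u^3"
proof -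
  have h: "t \<noteq> 0" "u \<noteq> 0" using assms by auto
  show ?thesis using h by (simp add: field_simps power2_eq_square power3_eq_cube)
qed

lemma algB:
  fixes t u p q :: real
  assumes "t > 0" "u = t + 1"
  shows "((t * q + 1 * p) * u - t * p * 1) / (u*u) = p / u^2 + t * q / u"
proof -
  have h: "t \<noteq> 0" "u \<noteq> 0" using assms by auto
  show ?thesis using h by (simp add: field_simps power2_eq_square) (simp add: assms(2) algebra_simps)
qed

lemma algC:
  fixes t u p q :: real
  assumes "t > 0" "u = t + 1"
  shows "((- q / t^2) * (t^2*u) - p * (3*t^2+2*t)) / ((t^2*u) * (t^2*u))
     = - (q / (t^4*u) + p * (3*t+2) / (t^3*u^2))"
proof -
  have h: "t \<noteq> 0" "u \<noteq> 0" using assms by auto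
  have t4: "t^4 = t*t*t*t" by (simp add: eval_nat_numeral)
  show ?thesis using h by (simp add: field_simps power2_eq_square power3_eq_cube t4)
qed

lemma deriv_Tt:
  assumes "\<forall>u>1/2. (V has_real_derivative V1 u) (at u)" "t > 1/2"
  shows "(Tt V has_real_derivative G1 V V1 t) (at t)"
proof -
  note d1 = chain_shift[OF assms] and d2 = chain_inv[OF assms]
  have t0: "t + 1 \<noteq> 0" "t > 0" using assms(2) by auto
  have dL: "((\<lambda>s. s + 1) has_real_derivative 1) (at t)" by (auto intro!: derivative_eq_intros)
  note raw = DERIV_divide[OF DERIV_add[OF DERIV_mult'[OF DERIV_ident d1] d2] dL t0(1)]
  show ?thesis unfolding Tt_def[abs_def]
    by (rule DERIV_cong[OF raw]) (simp only: alg_G1[OF t0(2) refl] G1_def)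
qed

lemma deriv_G1:
  assumes "\<forall>u>1/2. (V has_real_derivative V1 u) (at u)" "\<forall>u>1/2. (V1 has_real_derivative V2 u) (at u)" "t > 1/2"
  shows "(G1 V V1 has_real_derivative G2 V V1 V2 t) (at t)"
proof -
  note dV1 = chain_shift[OF assms(1,3)] and dV2 = chain_inv[OF assms(1,3)]
  note dW1 = chain_shift[OF assms(2,3)] and dW2 = chain_inv[OF assms(2,3)]
  have t0: "t > 0" using assms(3) by auto
  have nz: "(t+1)^2 \<noteq> 0" "t + 1 \<noteq> 0" "t^2 * (t+1) \<noteq> 0" using t0 by auto
  have dL: "((\<lambda>s. s + 1) has_real_derivative 1) (at t)" by (auto intro!: derivative_eq_intros)
  have dP: "((\<lambda>s. (s + 1)^2) has_real_derivative 2*(t+1)) (at t)" by (auto intro!: derivative_eq_intros)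
  have dQ: "((\<lambda>s. s^2 * (s + 1)) has_real_derivative 3*t^2+2*t) (at t)"
    by (auto intro!: derivative_eq_intros simp: algebra_simps power2_eq_square)
  note rawA = DERIV_divide[OF DERIV_diff[OF dV1 dV2] dP nz(1)]
  note rawB = DERIV_divide[OF DERIV_mult'[OF DERIV_ident dW1] dL nz(2)]
  note rawC = DERIV_divide[OF dW2 dQ nz(3)]
  note raw = DERIV_diff[OF DERIV_add[OF rawA rawB] rawC]
  have e: "G1 V V1 = (\<lambda>s. (V (s+1) - V (1+1/s)) / (s+1)^2 + s * V1 (s+1) / (s+1) - V1 (1+1/s) / (s^2*(s+1)))"
    by (rule ext) (simp add: G1_def)
  show ?thesis unfolding e
    by (rule DERIV_cong[OF raw]) (simp only: G2_def algA[OF t0 refl] algB[OF t0 refl] algC[OF t0 refl] diff_minus_eq_add)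
qed



lemma bnd1:
  fixes t A B D :: real
  assumes "1 \<le> t" "0 \<le> A" "A \<le> B" "0 \<le> D"
  shows "0 \<le> D/(t+1)^2 + t*B/(t+1) - A/(t^2*(t+1))"
proof -
  have tp: "0 < t+1" "1 \<le> t^2" using assms(1) by (auto simp: one_le_power)
  have "A/(t^2*(t+1)) \<le> A/(1*(t+1))"
    by (rule divide_left_mono) (use assms tp in \<open>auto intro: mult_right_mono\<close>)
  also have "\<dots> \<le> B/(t+1)" using assms tp by (simp add: divide_right_mono)
  also have "\<dots> \<le> t*B/(t+1)" using assms tp
    by (intro divide_right_mono) (auto intro: mult_right_mono[of 1 t B, simplified])
  finally have "A/(t^2*(t+1)) \<le> t*B/(t+1)" .
  moreover have "0 \<le> D/(t+1)^2" using assms by simp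
  ultimately show ?thesis by linarith
qed

lemma bnd2:
  fixes t A B D :: real
  assumes "1 \<le> t" "0 \<le> A" "B \<le> 1" "D \<le> t + 1 - (1 + 1/t)"
  shows "D/(t+1)^2 + t*B/(t+1) - A/(t^2*(t+1)) \<le> 1"
proof -
  have tp: "0 < t+1" "0 < t" using assms(1) by auto
  have a: "D/(t+1)^2 \<le> (t - 1/t)/(t+1)^2" using assms(4) by (intro divide_right_mono) auto
  have b: "t*B/(t+1) \<le> t/(t+1)" using assms tp by (intro divide_right_mono) auto
  have c: "0 \<le> A/(t^2*(t+1))" using assms tp by simp
  have d: "(t - 1/t)/(t+1)^2 + t/(t+1) \<le> 1"
  proof -
    have "0 \<le> 1/t" using tp by simp
    then have "t - 1/t \<le> t + 1" by linarith
    then have "(t - 1/t)/(t+1)^2 \<le> (t+1)/(t+1)^2" by (intro divide_right_mono) auto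
    also have "\<dots> = 1/(t+1)" using tp by (simp add: power2_eq_square)
    finally have "(t - 1/t)/(t+1)^2 + t/(t+1) \<le> 1/(t+1) + t/(t+1)" by simp
    also have "\<dots> = 1" using tp by (simp add: add_divide_distrib[symmetric])
    finally show ?thesis .
  qed
  show ?thesis using a b c d by linarith
qed

lemma bnd3:
  fixes t A B D A2 B2 :: real
  assumes "1 \<le> t" "0 \<le> A" "0 \<le> B" "D \<le> B*(t+1)" "0 \<le> A2" "0 \<le> B2"
  shows "0 \<le> (B + A/t^2)/(t+1)^2 - 2*D/(t+1)^3 + (B/(t+1)^2 + t*B2/(t+1))
              + (A2/(t^4*(t+1)) + A*(3*t+2)/(t^3*(t+1)^2))"
proof -
  have tp: "0 < t+1" "0 < t" using assms(1) by auto
  have a: "2*D/(t+1)^3 \<le> 2*(B*(t+1))/(t+1)^3" using assms tp by (intro divide_right_mono) auto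
  have gen: "\<forall>u::real. u \<noteq> 0 \<longrightarrow> 2*(B*u)/u^3 = 2*B/u^2" by (simp add: power2_eq_square power3_eq_cube)
  have a2: "2*(B*(t+1))/(t+1)^3 = 2*B/(t+1)^2" using gen tp by simp
  have b: "B/(t+1)^2 \<le> (B + A/t^2)/(t+1)^2" using assms by (intro divide_right_mono) auto
  have c: "0 \<le> t*B2/(t+1)" "0 \<le> A2/(t^4*(t+1))" "0 \<le> A*(3*t+2)/(t^3*(t+1)^2)" using assms tp by auto
  have e: "2*B/(t+1)^2 = B/(t+1)^2 + B/(t+1)^2" by simp
  show ?thesis using a a2 b c e by linarith
qed

lemma inv_derivs:
  assumes "invV V V1 V2" "u > 1/2"
  shows "(V has_real_derivative V1 u) (at u)" "(V1 has_real_derivative V2 u) (at u)"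
  using assms unfolding invV_def by auto

lemma inv_bnds:
  assumes "invV V V1 V2" "u \<ge> 1"
  shows "0 \<le> V1 u" "V1 u \<le> 1" "0 \<le> V2 u"
  using assms unfolding invV_def by auto

lemma inv_V1_mono:
  assumes "invV V V1 V2" "1 \<le> a" "a \<le> b"
  shows "V1 a \<le> V1 b"
  by (rule deriv_nonneg_imp_mono[of a b V1 V2]) (use assms inv_derivs inv_bnds in auto)

lemma inv_V_mono:
  assumes "invV V V1 V2" "1 \<le> a" "a \<le> b"
  shows "V a \<le> V b"
  by (rule deriv_nonneg_imp_mono[of a b V V1]) (use assms inv_derivs inv_bnds in auto)

lemma inv_lip:
  assumes "invV V V1 V2" "1 \<le> a" "a \<le> b"
  shows "V b - V a \<le> b - a"
proof -
  have "(\<lambda>u. u - V u) a \<le> (\<lambda>u. u - V u) b"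
  proof (rule deriv_nonneg_imp_mono[of a b _ "\<lambda>u. 1 - V1 u"])
    fix x assume x: "x \<in> {a..b}"
    then show "((\<lambda>u. u - V u) has_real_derivative 1 - V1 x) (at x)"
      using assms by (intro DERIV_diff DERIV_ident inv_derivs(1)[OF assms(1)]) auto
    show "0 \<le> 1 - V1 x" using inv_bnds(2)[OF assms(1), of x] x assms by auto
  qed (use assms in auto)
  then show ?thesis by simp
qed

lemma inv_cvx:
  assumes "invV V V1 V2" "1 \<le> a" "a \<le> b"
  shows "V b - V a \<le> V1 b * (b - a)"
proof -
  have "(\<lambda>u. V1 b * u - V u) a \<le> (\<lambda>u. V1 b * u - V u) b"
  proof (rule deriv_nonneg_imp_mono[of a b _ "\<lambda>u. V1 b * 1 - V1 u"])
    fix x assume x: "x \<in> {a..b}"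
    then show "((\<lambda>u. V1 b * u - V u) has_real_derivative V1 b * 1 - V1 x) (at x)"
      using assms by (intro DERIV_diff DERIV_cmult DERIV_ident inv_derivs(1)[OF assms(1)]) auto
    show "0 \<le> V1 b * 1 - V1 x" using inv_V1_mono[OF assms(1), of x b] x assms by auto
  qed (use assms in auto)
  then show ?thesis by (simp add: algebra_simps)
qed

lemma inv_step:
  assumes I: "invV V V1 V2"
  shows "invV (Tt V) (G1 V V1) (G2 V V1 V2)"
  unfolding invV_def
proof (intro conjI allI impI)
  fix u :: real assume u: "u > 1/2"
  have dV: "\<forall>u>1/2. (V has_real_derivative V1 u) (at u)" and dV1: "\<forall>u>1/2. (V1 has_real_derivative V2 u) (at u)"
    using inv_derivs[OF I] by auto
  show "(Tt V has_real_derivative G1 V V1 u) (at u)" by (rule deriv_Tt[OF dV u])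
  show "(G1 V V1 has_real_derivative G2 V V1 V2 u) (at u)" by (rule deriv_G1[OF dV dV1 u])
next
  fix t :: real assume t: "1 \<le> t"
  define c where "c = 1 + 1/t"
  have "0 \<le> 1/t" "1/t \<le> 1" using t by auto
  then have c1: "1 \<le> c" "c \<le> t + 1" using t unfolding c_def by linarith+
  have t1: "1 \<le> t + 1" using t by simp
  have A0: "0 \<le> V1 c" using inv_bnds[OF I c1(1)] by simp
  have AB: "V1 c \<le> V1 (t+1)" by (rule inv_V1_mono[OF I c1])
  have B0: "0 \<le> V1 (t+1)" "V1 (t+1) \<le> 1" using inv_bnds[OF I t1] by auto
  have D0: "0 \<le> V (t+1) - V c" using inv_V_mono[OF I c1] by simp
  have D1: "V (t+1) - V c \<le> t + 1 - c" by (rule inv_lip[OF I c1])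
  have D2: "V (t+1) - V c \<le> V1 (t+1) * (t+1)"
  proof -
    have "V (t+1) - V c \<le> V1 (t+1) * (t + 1 - c)" by (rule inv_cvx[OF I c1])
    also have "\<dots> \<le> V1 (t+1) * (t+1)" using B0 c1 by (intro mult_left_mono) auto
    finally show ?thesis .
  qed
  have A2: "0 \<le> V2 c" "0 \<le> V2 (t+1)" using inv_bnds[OF I c1(1)] inv_bnds[OF I t1] by auto
  show "0 \<le> G1 V V1 t" unfolding G1_def c_def[symmetric]
    by (rule bnd1[OF t A0 AB D0])
  show "G1 V V1 t \<le> 1" unfolding G1_def c_def[symmetric]
    by (rule bnd2[OF t A0 B0(2)]) (use D1 c_def in simp)
  show "0 \<le> G2 V V1 V2 t" unfolding G2_def c_def[symmetric]
    by (rule bnd3[OF t A0 B0(1) D2 A2(1) A2(2)])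
qed

definition V0 :: "real \<Rightarrow> real" where "V0 t = t + 1/t"

lemma inv_V0: "invV V0 (\<lambda>t. 1 - 1/t^2) (\<lambda>t. 2/t^3)"
  unfolding invV_def
proof (intro conjI allI impI)
  fix u :: real assume u: "u > 1/2"
  then have u0: "u \<noteq> 0" by auto
  show "(V0 has_real_derivative 1 - 1/u^2) (at u)" unfolding V0_def[abs_def]
    using u0 by (auto intro!: derivative_eq_intros simp: power2_eq_square field_simps)
  show "((\<lambda>t. 1 - 1/t^2) has_real_derivative 2/u^3) (at u)"
    using u0 by (auto intro!: derivative_eq_intros simp: power2_eq_square power3_eq_cube field_simps)
next
  fix u :: real assume u: "1 \<le> u"
  then have "1 \<le> u^2" by (simp add: one_le_power)
  then have "1/u^2 \<le> 1" by (auto simp: divide_le_eq)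
  then show "0 \<le> 1 - 1/u^2" by simp
  show "1 - 1/u^2 \<le> 1" by simp
  show "0 \<le> 2/u^3" using u by simp
qed

lemma inv_iter: "\<exists>V1 V2. invV ((Tt ^^ n) V0) V1 V2"
proof (induction n)
  case 0 then show ?case using inv_V0 by auto
next
  case (Suc n)
  then obtain V1 V2 where "invV ((Tt ^^ n) V0) V1 V2" by auto
  then have "invV (Tt ((Tt ^^ n) V0)) (G1 ((Tt ^^ n) V0) V1) (G2 ((Tt ^^ n) V0) V1 V2)" by (rule inv_step)
  then show ?case by auto
qed

lemma iter_bounds:
  assumes "1 \<le> t"
  shows "(Tt ^^ n) V0 1 \<le> (Tt ^^ n) V0 t" "(Tt ^^ n) V0 t - (Tt ^^ n) V0 1 \<le> t - 1"
  using inv_iter[of n] inv_V_mono[of _ _ _ 1 t] inv_lip[of _ _ _ 1 t] assms by auto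



lemma farey_meas[measurable]: "farey \<in> borel_measurable borel"
  unfolding farey_def[abs_def] by measurable

lemma funpow_meas[measurable]: "(farey ^^ k) \<in> borel_measurable borel"
proof (induction k)
  case 0 then show ?case by simp
next
  case (Suc k) then show ?case by (simp add: measurable_compose[OF _ farey_meas])
qed

lemma farey_range: "x \<in> {0..1} \<Longrightarrow> farey x \<in> {0..1}"
proof -
  assume x: "x \<in> {0..1}"
  show ?thesis
  proof (cases "x \<le> 1/2")
    case True
    then have "1 - x > 0" by simp
    moreover have "x \<le> 1 - x" using True by simp
    ultimately show ?thesis using True x by (simp add: farey_def divide_le_eq_1)
  next
    case False
    then have "x > 0" by simp
    moreover have "1 - x \<le> x" using False by simp
    ultimately show ?thesis using False x by (simp add: farey_def divide_le_eq_1)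
  qed
qed

lemma funpow_range: "x \<in> {0..1} \<Longrightarrow> (farey ^^ k) x \<in> {0..1}"
  by (induction k) (auto simp del: atLeastAtMost_iff intro: farey_range)

lemma pre_left:
  fixes y \<alpha> \<beta> :: real
  assumes "0 \<le> y" "y \<le> 1/2" "0 \<le> \<alpha>" "0 \<le> \<beta>"
  shows "farey y \<in> {\<alpha>..\<beta>} \<longleftrightarrow> y \<in> {\<alpha>/(1+\<alpha>)..\<beta>/(1+\<beta>)}"
proof -
  have f: "farey y = y/(1-y)" using assms by (simp add: farey_def)
  have p: "1 - y > 0" "1 + \<alpha> > 0" "1 + \<beta> > 0" using assms by auto
  have "\<alpha> \<le> y/(1-y) \<longleftrightarrow> \<alpha>*(1-y) \<le> y" using p by (simp add: le_divide_eq)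
  also have "\<dots> \<longleftrightarrow> \<alpha> \<le> y*(1+\<alpha>)" by (simp add: algebra_simps)
  also have "\<dots> \<longleftrightarrow> \<alpha>/(1+\<alpha>) \<le> y" using p by (simp add: divide_le_eq)
  finally have 1: "\<alpha> \<le> y/(1-y) \<longleftrightarrow> \<alpha>/(1+\<alpha>) \<le> y" .
  have "y/(1-y) \<le> \<beta> \<longleftrightarrow> y \<le> \<beta>*(1-y)" using p by (simp add: divide_le_eq)
  also have "\<dots> \<longleftrightarrow> y*(1+\<beta>) \<le> \<beta>" by (simp add: algebra_simps)
  also have "\<dots> \<longleftrightarrow> y \<le> \<beta>/(1+\<beta>)" using p by (simp add: le_divide_eq)
  finally have 2: "y/(1-y) \<le> \<beta> \<longleftrightarrow> y \<le> \<beta>/(1+\<beta>)" .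
  show ?thesis using 1 2 f by simp
qed

lemma pre_right:
  fixes y \<alpha> \<beta> :: real
  assumes "1/2 < y" "y \<le> 1" "0 \<le> \<alpha>" "0 \<le> \<beta>"
  shows "farey y \<in> {\<alpha>..\<beta>} \<longleftrightarrow> y \<in> {1/(1+\<beta>)..1/(1+\<alpha>)}"
proof -
  have f: "farey y = (1-y)/y" using assms by (simp add: farey_def)
  have p: "y > 0" "1 + \<alpha> > 0" "1 + \<beta> > 0" using assms by auto
  have "\<alpha> \<le> (1-y)/y \<longleftrightarrow> \<alpha>*y \<le> 1 - y" using p by (simp add: le_divide_eq)
  also have "\<dots> \<longleftrightarrow> y*(1+\<alpha>) \<le> 1" by (simp add: algebra_simps)
  also have "\<dots> \<longleftrightarrow> y \<le> 1/(1+\<alpha>)" using p by (simp add: le_divide_eq)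
  finally have 1: "\<alpha> \<le> (1-y)/y \<longleftrightarrow> y \<le> 1/(1+\<alpha>)" .
  have "(1-y)/y \<le> \<beta> \<longleftrightarrow> 1 - y \<le> \<beta>*y" using p by (simp add: divide_le_eq)
  also have "\<dots> \<longleftrightarrow> 1 \<le> y*(1+\<beta>)" by (simp add: algebra_simps)
  also have "\<dots> \<longleftrightarrow> 1/(1+\<beta>) \<le> y" using p by (simp add: divide_le_eq)
  finally have 2: "(1-y)/y \<le> \<beta> \<longleftrightarrow> 1/(1+\<beta>) \<le> y" .
  show ?thesis using 1 2 f by auto
qed

lemma pre_both:
  fixes y \<alpha> \<beta> :: real
  assumes "0 \<le> y" "y \<le> 1" "0 \<le> \<alpha>" "\<alpha> \<le> \<beta>" "\<beta> \<le> 1"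
  shows "farey y \<in> {\<alpha>..\<beta>} \<longleftrightarrow> y \<in> {\<alpha>/(1+\<alpha>)..\<beta>/(1+\<beta>)} \<or> y \<in> {1/(1+\<beta>)..1/(1+\<alpha>)}"
proof -
  have p: "1 + \<alpha> > 0" "1 + \<beta> > 0" using assms by auto
  have b1: "\<beta>/(1+\<beta>) \<le> 1/2" using p assms by (simp add: divide_le_eq)
  have a2: "1/2 \<le> 1/(1+\<beta>)" using p assms by (simp add: le_divide_eq)
  have a1: "\<alpha>/(1+\<alpha>) \<le> 1/2" using p assms by (simp add: divide_le_eq)
  show ?thesis
  proof (cases "y \<le> 1/2")
    case True
    have "y \<in> {1/(1+\<beta>)..1/(1+\<alpha>)} \<Longrightarrow> y \<in> {\<alpha>/(1+\<alpha>)..\<beta>/(1+\<beta>)}"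
    proof -
      assume "y \<in> {1/(1+\<beta>)..1/(1+\<alpha>)}"
      then have y: "y = 1/2" "1/(1+\<beta>) \<le> 1/2" using True a2 by auto
      then have "\<beta> = 1" using p assms by (simp add: divide_le_eq)
      then show ?thesis using y a1 by (simp del: atLeastAtMost_iff) (simp add: y(1))
    qed
    then show ?thesis using pre_left[OF assms(1) True assms(3)] assms by auto
  next
    case False
    have "\<not> y \<le> \<beta>/(1+\<beta>)" using b1 False by linarith
    then have "y \<notin> {\<alpha>/(1+\<alpha>)..\<beta>/(1+\<beta>)}" by simp
    then show ?thesis using pre_right[of y \<alpha> \<beta>] False assms by auto
  qed
qed

definition PL :: "(real \<Rightarrow> real) \<Rightarrow> real \<Rightarrow> real" where
  "PL p y = (p (y/(1+y)) + p (1/(1+y))) / (1+y)^2"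

definition pk :: "nat \<Rightarrow> real \<Rightarrow> real" where
  "pk k = (PL ^^ k) (\<lambda>_. 1)"

lemma psi_range:
  fixes y :: real assumes "y \<in> {0..1}"
  shows "y/(1+y) \<in> {0..1}" "1/(1+y) \<in> {0..1}"
  using assms by (auto simp: divide_le_eq)

lemma PL_cont:
  assumes "continuous_on {0..1} p"
  shows "continuous_on {0..1} (PL p)"
proof -
  have c1: "continuous_on {0..1} (\<lambda>y::real. p (y/(1+y)))"
    by (rule continuous_on_compose2[OF assms]) (auto intro!: continuous_intros simp: psi_range)
  have c2: "continuous_on {0..1} (\<lambda>y::real. p (1/(1+y)))"
    by (rule continuous_on_compose2[OF assms]) (auto intro!: continuous_intros simp: psi_range)
  show ?thesis unfolding PL_def[abs_def]
    by (intro continuous_intros c1 c2) auto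
qed

lemma pk_cont: "continuous_on {0..1} (pk k)"
proof (induction k)
  case 0 then show ?case by (simp add: pk_def)
next
  case (Suc k) then show ?case using PL_cont by (simp add: pk_def)
qed

lemma inv_mono:
  fixes \<alpha> \<beta> :: real assumes "0 \<le> \<alpha>" "\<alpha> \<le> \<beta>"
  shows "1/(1+\<beta>) \<le> 1/(1+\<alpha>)"
  by (rule divide_left_mono) (use assms in auto)

lemma inv_smono:
  fixes \<alpha> \<beta> :: real assumes "0 \<le> \<alpha>" "\<alpha> < \<beta>"
  shows "1/(1+\<beta>) < 1/(1+\<alpha>)"
  by (rule divide_strict_left_mono) (use assms in auto)

lemma psi1_eq: "0 \<le> (\<alpha>::real) \<Longrightarrow> \<alpha>/(1+\<alpha>) = 1 - 1/(1+\<alpha>)"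
  by (simp add: field_simps)

lemma psi1_mono:
  fixes \<alpha> \<beta> :: real assumes "0 \<le> \<alpha>" "\<alpha> \<le> \<beta>"
  shows "\<alpha>/(1+\<alpha>) \<le> \<beta>/(1+\<beta>)"
  using inv_mono[OF assms] psi1_eq[OF assms(1)] psi1_eq[of \<beta>] assms by simp

lemma half_bounds:
  fixes \<beta> :: real assumes "0 \<le> \<beta>" "\<beta> \<le> 1"
  shows "\<beta>/(1+\<beta>) \<le> 1/2" "1/2 \<le> 1/(1+\<beta>)"
proof -
  have "1/(1+1) \<le> 1/(1+\<beta>)" by (rule inv_mono) (use assms in auto)
  then show "1/2 \<le> 1/(1+\<beta>)" by simp
  then show "\<beta>/(1+\<beta>) \<le> 1/2" using psi1_eq[OF assms(1)] by simp
qed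

lemma subst1:
  fixes p :: "real \<Rightarrow> real" and \<alpha> \<beta> :: real
  assumes p: "continuous_on {0..1} p" and ab: "0 \<le> \<alpha>" "\<alpha> \<le> \<beta>" "\<beta> \<le> 1"
  shows "((\<lambda>y. 1/(1+y)^2 * p (y/(1+y))) has_integral integral {\<alpha>/(1+\<alpha>)..\<beta>/(1+\<beta>)} p) {\<alpha>..\<beta>}"
proof -
  have mono: "\<alpha>/(1+\<alpha>) \<le> \<beta>/(1+\<beta>)" using psi1_mono ab by blast
  have "((\<lambda>y. (1/(1+y)^2) *\<^sub>R p (y/(1+y))) has_integral integral {\<alpha>/(1+\<alpha>)..\<beta>/(1+\<beta>)} p) {\<alpha>..\<beta>}"
  proof (rule has_integral_substitution_strong[where s="{}" and a=\<alpha> and b=\<beta> and g="\<lambda>y. y/(1+y)" and c=0 and d=1 and f=p and g'="\<lambda>y. 1/(1+y)^2"])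
    show "(\<lambda>y. y/(1+y)) ` {\<alpha>..\<beta>} \<subseteq> {0..1}" using ab psi_range by auto
    show "continuous_on {\<alpha>..\<beta>} (\<lambda>y. y/(1+y))" using ab by (auto intro!: continuous_intros)
    fix x assume "x \<in> {\<alpha>..\<beta>} - {}"
    then have "1 + x \<noteq> 0" using ab by auto
    then show "((\<lambda>y. y/(1+y)) has_field_derivative 1/(1+x)^2) (at x within {\<alpha>..\<beta>})"
      by (auto intro!: derivative_eq_intros simp: field_simps power2_eq_square)
  qed (use ab mono p in auto)
  then show ?thesis by simp
qed

lemma subst2:
  fixes p :: "real \<Rightarrow> real" and \<alpha> \<beta> :: real
  assumes p: "continuous_on {0..1} p" and ab: "0 \<le> \<alpha>" "\<alpha> \<le> \<beta>" "\<beta> \<le> 1"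
  shows "((\<lambda>y. 1/(1+y)^2 * p (1/(1+y))) has_integral integral {1/(1+\<beta>)..1/(1+\<alpha>)} p) {\<alpha>..\<beta>}"
proof -
  have "((\<lambda>y. (-1/(1+y)^2) *\<^sub>R p (1/(1+y))) has_integral
     (integral {1/(1+\<alpha>)..1/(1+\<beta>)} p - integral {1/(1+\<beta>)..1/(1+\<alpha>)} p)) {\<alpha>..\<beta>}"
  proof (rule has_integral_substitution_general[where s="{}" and a=\<alpha> and b=\<beta> and g="\<lambda>y. 1/(1+y)" and c=0 and d=1 and f=p and g'="\<lambda>y. -1/(1+y)^2"])
    show "(\<lambda>y. 1/(1+y)) ` {\<alpha>..\<beta>} \<subseteq> {0..1}" using ab psi_range by auto
    show "continuous_on {\<alpha>..\<beta>} (\<lambda>y. 1/(1+y))" using ab by (auto intro!: continuous_intros)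
    fix x assume "x \<in> {\<alpha>..\<beta>} - {}"
    then have "1 + x \<noteq> 0" using ab by auto
    then show "((\<lambda>y. 1/(1+y)) has_field_derivative -1/(1+x)^2) (at x within {\<alpha>..\<beta>})"
      by (auto intro!: derivative_eq_intros simp: field_simps power2_eq_square)
  qed (use ab p in auto)
  moreover have "integral {1/(1+\<alpha>)..1/(1+\<beta>)} p = 0"
  proof (cases "\<alpha> = \<beta>")
    case True then show ?thesis by simp
  next
    case False
    then have "1/(1+\<beta>) < 1/(1+\<alpha>)" using ab by (intro inv_smono) auto
    then show ?thesis by simp
  qed
  ultimately have "((\<lambda>y. (-1/(1+y)^2) * p (1/(1+y))) has_integral
     (- integral {1/(1+\<beta>)..1/(1+\<alpha>)} p)) {\<alpha>..\<beta>}" by simp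
  from has_integral_neg[OF this] show ?thesis by simp
qed

lemma set_eq_step:
  assumes ab: "0 \<le> \<alpha>" "\<alpha> \<le> \<beta>" "\<beta> \<le> 1"
  shows "{x \<in> {0..1}. (farey ^^ Suc k) x \<in> {\<alpha>..\<beta>}} =
    {x \<in> {0..1}. (farey ^^ k) x \<in> {\<alpha>/(1+\<alpha>)..\<beta>/(1+\<beta>)}} \<union>
    {x \<in> {0..1}. (farey ^^ k) x \<in> {1/(1+\<beta>)..1/(1+\<alpha>)}}"
proof -
  have "(farey ^^ Suc k) x \<in> {\<alpha>..\<beta>} \<longleftrightarrow>
        (farey ^^ k) x \<in> {\<alpha>/(1+\<alpha>)..\<beta>/(1+\<beta>)} \<or> (farey ^^ k) x \<in> {1/(1+\<beta>)..1/(1+\<alpha>)}"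
    if x: "x \<in> {0..1}" for x
  proof -
    have y: "(farey ^^ k) x \<in> {0..1}" by (rule funpow_range[OF x])
    show ?thesis using pre_both[of "(farey ^^ k) x" \<alpha> \<beta>] y ab by simp
  qed
  then show ?thesis by auto
qed

lemma Icc01_fmeas: "{0..1::real} \<in> fmeasurable lborel"
  by (simp add: fmeasurable_def)

lemma S_fmeas: "{x \<in> {0..1}. (farey ^^ k) x \<in> {a..b::real}} \<in> fmeasurable lborel"
  by (rule fmeasurableI2[OF Icc01_fmeas]) (auto, measurable)

lemma meas_pk:
  assumes "0 \<le> \<alpha>" "\<alpha> \<le> \<beta>" "\<beta> \<le> 1"
  shows "measure lborel {x \<in> {0..1}. (farey ^^ k) x \<in> {\<alpha>..\<beta>}} = integral {\<alpha>..\<beta>} (pk k)"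
  using assms
proof (induction k arbitrary: \<alpha> \<beta>)
  case 0
  have "{x \<in> {0..1}. (farey ^^ 0) x \<in> {\<alpha>..\<beta>}} = {\<alpha>..\<beta>}" using 0 by auto
  then show ?case using 0 by (simp add: pk_def)
next
  case (Suc k)
  let ?S = "\<lambda>a b. {x \<in> {0..1}. (farey ^^ k) x \<in> {a..b::real}}"
  define a1 where "a1 = \<alpha>/(1+\<alpha>)"
  define b1 where "b1 = \<beta>/(1+\<beta>)"
  define a2 where "a2 = 1/(1+\<beta>)"
  define b2 where "b2 = 1/(1+\<alpha>)"
  have ab01: "\<alpha> \<in> {0..1}" "\<beta> \<in> {0..1}" using Suc.prems by auto
  have r1: "0 \<le> a1" "a1 \<le> b1" "b1 \<le> 1"
    using psi_range[OF ab01(1)] psi_range[OF ab01(2)] psi1_mono[of \<alpha> \<beta>] Suc.prems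
    by (auto simp: a1_def b1_def)
  have r2: "0 \<le> a2" "a2 \<le> b2" "b2 \<le> 1"
    using psi_range[OF ab01(1)] psi_range[OF ab01(2)] inv_mono[of \<alpha> \<beta>] Suc.prems
    by (auto simp: a2_def b2_def)
  have b1h: "b1 \<le> 1/2" using half_bounds[of \<beta>] Suc.prems by (simp add: b1_def)
  have a2h: "1/2 \<le> a2" using half_bounds[of \<beta>] Suc.prems by (simp add: a2_def)
  have eq: "{x \<in> {0..1}. (farey ^^ Suc k) x \<in> {\<alpha>..\<beta>}} = ?S a1 b1 \<union> ?S a2 b2"
    unfolding a1_def b1_def a2_def b2_def by (rule set_eq_step[OF Suc.prems])
  have int_sub: "?S a1 b1 \<inter> ?S a2 b2 \<subseteq> ?S (1/2) (1/2)" using b1h a2h by auto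
  have m0': "measure lborel (?S (1/2) (1/2)) = integral {1/2..1/2} (pk k)" by (rule Suc.IH) auto
  have "integral {1/2..1/2::real} (pk k) = 0" by simp
  then have m0: "measure lborel (?S (1/2) (1/2)) = 0" using m0' by linarith
  have "measure lborel (?S a1 b1 \<inter> ?S a2 b2) \<le> measure lborel (?S (1/2) (1/2))"
    by (rule measure_mono_fmeasurable[OF int_sub fmeasurableD[OF fmeasurable.Int[OF S_fmeas S_fmeas]] S_fmeas])
  then have mi: "measure lborel (?S a1 b1 \<inter> ?S a2 b2) = 0" using m0 measure_nonneg[of lborel "?S a1 b1 \<inter> ?S a2 b2"] by linarith
  have "measure lborel {x \<in> {0..1}. (farey ^^ Suc k) x \<in> {\<alpha>..\<beta>}}
      = measure lborel (?S a1 b1) + measure lborel (?S a2 b2)"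
    unfolding eq using measure_Un3[OF S_fmeas S_fmeas, of k a1 b1 k a2 b2] mi by linarith
  also have "\<dots> = integral {a1..b1} (pk k) + integral {a2..b2} (pk k)"
    using Suc.IH[OF r1] Suc.IH[OF r2] by linarith
  also have "\<dots> = integral {\<alpha>..\<beta>} (pk (Suc k))"
  proof -
    note h1 = subst1[OF pk_cont Suc.prems, of k]
    note h2 = subst2[OF pk_cont Suc.prems, of k]
    have "((\<lambda>y. 1/(1+y)^2 * pk k (y/(1+y)) + 1/(1+y)^2 * pk k (1/(1+y))) has_integral
        (integral {a1..b1} (pk k) + integral {a2..b2} (pk k))) {\<alpha>..\<beta>}"
      using has_integral_add[OF h1 h2] by (simp add: a1_def b1_def a2_def b2_def)
    moreover have "(\<lambda>y. 1/(1+y)^2 * pk k (y/(1+y)) + 1/(1+y)^2 * pk k (1/(1+y))) = pk (Suc k)"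
      by (rule ext) (simp add: pk_def PL_def add_divide_distrib)
    ultimately show ?thesis by (simp add: integral_unique)
  qed
  finally show ?case .
qed



lemma fk: "x \<ge> 0 \<Longrightarrow> (farey_transfer ^^ k) phi0 x = x * pk k x"
proof (induction k arbitrary: x)
  case 0 then show ?case by (simp add: phi0_def pk_def)
next
  case (Suc k)
  have a: "x/(1+x) \<ge> 0" "1/(1+x) \<ge> 0" using Suc.prems by auto
  have p: "1 + x > 0" using Suc.prems by auto
  have "(farey_transfer ^^ Suc k) phi0 x =
      (x/(1+x) * pk k (x/(1+x)) + x * (1/(1+x) * pk k (1/(1+x)))) / (1+x)"
    by (simp add: farey_transfer_def Suc.IH[OF a(1)] Suc.IH[OF a(2)])
  also have "\<dots> = x * ((pk k (x/(1+x)) + pk k (1/(1+x)))/(1+x)^2)"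
  proof -
    have g: "\<And>u A B. u \<noteq> (0::real) \<Longrightarrow> (x/u*A + x*(1/u*B))/u = x*((A+B)/u^2)"
      by (simp add: field_simps power2_eq_square)
    show ?thesis using g[of "1+x"] p by simp
  qed
  also have "\<dots> = x * pk (Suc k) x" by (simp add: pk_def PL_def)
  finally show ?case .
qed

definition Ssum :: "nat \<Rightarrow> real \<Rightarrow> real" where
  "Ssum n x = (\<Sum>k=0..n. (farey_transfer ^^ k) phi0 x)"

lemma Ssum_Suc: "Ssum (Suc n) x = x + farey_transfer (Ssum n) x"
proof -
  have "Ssum (Suc n) x = (farey_transfer ^^ 0) phi0 x + (\<Sum>k=0..n. (farey_transfer ^^ Suc k) phi0 x)"
    unfolding Ssum_def by (simp only: sum.atLeast0_atMost_Suc_shift comp_def)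
  also have "(\<Sum>k=0..n. (farey_transfer ^^ Suc k) phi0 x)
      = (\<Sum>k=0..n. ((farey_transfer ^^ k) phi0 (x/(1+x)) + x * (farey_transfer ^^ k) phi0 (1/(1+x))) / (1+x))"
    by (simp add: farey_transfer_def)
  also have "\<dots> = farey_transfer (Ssum n) x"
    by (simp add: farey_transfer_def Ssum_def sum_divide_distrib sum.distrib sum_distrib_left add_divide_distrib)
  finally show ?thesis by (simp add: phi0_def)
qed

lemma Ssum_V: "x > 0 \<Longrightarrow> Ssum n x = (Tt ^^ n) V0 (1/x) - 1/x"
proof (induction n arbitrary: x)
  case 0 then show ?case by (simp add: Ssum_def phi0_def V0_def)
next
  case (Suc n)
  let ?W = "(Tt ^^ n) V0"
  have a: "x/(1+x) > 0" "1/(1+x) > 0" using Suc.prems by auto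
  have x0: "x \<noteq> 0" "1 + x \<noteq> 0" "1 + x > 0" using Suc.prems by auto
  have e1: "1/(x/(1+x)) = 1 + 1/x" using x0 by (simp add: field_simps)
  have e2: "1/(1/(1+x)) = 1 + x" by simp
  have h1: "Ssum n (x/(1+x)) = ?W (1 + 1/x) - (1 + 1/x)" using Suc.IH[OF a(1)] unfolding e1 .
  have h2: "Ssum n (1/(1+x)) = ?W (1+x) - (1+x)" using Suc.IH[OF a(2)] unfolding e2 .
  have "Ssum (Suc n) x = x + (Ssum n (x/(1+x)) + x * Ssum n (1/(1+x))) / (1+x)"
    by (simp only: Ssum_Suc farey_transfer_def)
  also have "\<dots> = x + ((?W (1 + 1/x) - (1 + 1/x)) + x * (?W (1+x) - (1+x))) / (1+x)"
    by (simp only: h1 h2)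
  finally have "Ssum (Suc n) x = x + ((?W (1 + 1/x) - (1 + 1/x)) + x * (?W (1+x) - (1+x))) / (1+x)" .
  also have "\<dots> = (?W (1 + 1/x) + x * ?W (1+x)) / (1+x) - 1/x"
  proof -
    have k1: "((?W (1 + 1/x)) - (1+1/x)) + x*((?W (1+x)) - (1+x)) = ((?W (1 + 1/x)) + x*(?W (1+x))) - (1+x)*(x+1/x)"
      using x0 by (simp add: field_simps)
    have k2: "(((?W (1 + 1/x)) + x*(?W (1+x))) - (1+x)*(x+1/x))/(1+x) = ((?W (1 + 1/x)) + x*(?W (1+x)))/(1+x) - (x + 1/x)"
      using x0 by (simp add: diff_divide_distrib)
    have g: "x + (((?W (1 + 1/x)) - (1 + 1/x)) + x * ((?W (1+x)) - (1+x))) / (1+x) = ((?W (1 + 1/x)) + x * (?W (1+x))) / (1+x) - 1/x"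
      unfolding k1 k2 by simp
    show ?thesis by (rule g)
  qed
  also have "\<dots> = Tt ?W (1/x) - 1/x"
  proof -
    have "Tt ?W (1/x) = (1/x * ?W (1/x + 1) + ?W (1 + 1/(1/x))) / (1/x + 1)" by (simp add: Tt_def)
    also have "\<dots> = (1/x * ?W (1 + 1/x) + ?W (1 + x)) / (1 + 1/x)" by (simp add: add.commute)
    also have "\<dots> = (?W (1 + 1/x) + x * ?W (1+x)) / (1+x)"
    proof -
      have gg: "(1/x * P + Q) / (1 + 1/x) = (P + x * Q)/(1+x)" for P Q
      proof -
        have n1: "1/x * P + Q = (P + x * Q)/x" using x0 by (simp add: field_simps)
        have n2: "1 + 1/x = (1+x)/x" using x0 by (simp add: field_simps)
        show ?thesis unfolding n1 n2 using x0 by simp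
      qed
      show ?thesis by (rule gg)
    qed
    finally show ?thesis by simp
  qed
  finally show ?case by simp
qed

lemma int_inv:
  fixes c :: real and N :: real
  assumes "N \<ge> 1"
  shows "((\<lambda>y. c / y) has_integral (c * ln N)) {1/N..1}"
proof -
  have N0: "N > 0" using assms by simp
  have "((\<lambda>y. c / y) has_integral (c * ln 1 - c * ln (1/N))) {1/N..1}"
  proof (rule fundamental_theorem_of_calculus)
    show "1/N \<le> 1" using assms by (simp add: divide_le_eq)
    fix y assume y: "y \<in> {1/N..1}"
    then have "y > 0" using N0 by (auto intro: less_le_trans[of 0 "1/N"])
    then have "((\<lambda>y. c * ln y) has_real_derivative c / y) (at y within {1/N..1})"
      by (auto intro!: derivative_eq_intros simp: field_simps)
    then show "((\<lambda>y. c * ln y) has_vector_derivative c / y) (at y within {1/N..1})"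
      by (simp add: has_real_derivative_iff_has_vector_derivative)
  qed
  then show ?thesis using N0 by (simp add: ln_div)
qed

theorem lemma1:
  fixes N :: nat and \<sigma> x :: real
  assumes "N \<ge> 2" and "\<sigma> \<ge> 0" and "x \<in> {1 / real N..1}"
  shows "\<bar>(\<Sum>k=0..nat \<lfloor>\<sigma>\<rfloor>. (farey_transfer ^^ k) phi0 x) - a_sigma N \<sigma>\<bar>
           \<le> real N * (real N - 1) / 2"
proof -
  define n where "n = nat \<lfloor>\<sigma>\<rfloor>"
  define W where "W = (Tt ^^ n) V0"
  define M where "M = W 1 - 1"
  define m where "m = W 1 - real N"
  have N2: "real N \<ge> 2" using assms(1) by simp
  have N0: "real N > 0" using N2 by simp
  have iN: "0 < 1 / real N" "1 / real N \<le> 1" using N2 by auto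
  have bnd: "m \<le> Ssum n y \<and> Ssum n y \<le> M" if y: "y \<in> {1 / real N..1}" for y
  proof -
    have "1/real N \<le> y" using y by simp
    then have y0: "y > 0" using iN(1) by linarith
    have t1: "1 \<le> 1/y" using y y0 by (simp add: le_divide_eq)
    have tN: "1/y \<le> real N" using y y0 N0 by (simp add: divide_le_eq mult.commute)
    have S: "Ssum n y = W (1/y) - 1/y" using Ssum_V[OF y0] by (simp add: W_def)
    show ?thesis using iter_bounds[OF t1, of n] S t1 tN unfolding M_def m_def W_def by auto
  qed
  have pk_int: "pk k integrable_on {1/real N..1}" for k
    by (rule integrable_continuous_real, rule continuous_on_subset[OF pk_cont]) (use iN in auto)
  have "a_sigma N \<sigma> = (1 / ln (real N)) * (\<Sum>k=0..n. integral {1/real N..1} (pk k))"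
    unfolding a_sigma_def n_def using meas_pk[of "1/real N" 1] iN by simp
  also have "(\<Sum>k=0..n. integral {1/real N..1} (pk k)) = integral {1/real N..1} (\<lambda>y. \<Sum>k=0..n. pk k y)"
    by (rule integral_sum[symmetric]) (use pk_int in auto)
  finally have aeq: "a_sigma N \<sigma> = (1 / ln (real N)) * integral {1/real N..1} (\<lambda>y. \<Sum>k=0..n. pk k y)" .
  have sumeq: "(\<Sum>k=0..n. pk k y) = Ssum n y / y" if "y > 0" for y
    using that by (simp add: Ssum_def fk sum_distrib_left[symmetric])
  have intS: "(\<lambda>y. \<Sum>k=0..n. pk k y) integrable_on {1/real N..1}"
    by (rule integrable_sum) (use pk_int in auto)
  have N1: "real N \<ge> 1" using N2 by simp
  have lnN: "ln (real N) > 0" using N2 by simp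
  have I1: "m * ln (real N) \<le> integral {1/real N..1} (\<lambda>y. \<Sum>k=0..n. pk k y)"
  proof -
    have "integral {1/real N..1} (\<lambda>y. m / y) \<le> integral {1/real N..1} (\<lambda>y. \<Sum>k=0..n. pk k y)"
    proof (rule integral_le)
      show "(\<lambda>y. m / y) integrable_on {1/real N..1}" using int_inv[OF N1] by blast
      show "(\<lambda>y. \<Sum>k=0..n. pk k y) integrable_on {1/real N..1}" by (rule intS)
      fix y assume y: "y \<in> {1/real N..1}"
      then have "1/real N \<le> y" by simp
      then have y0: "y > 0" using iN(1) by linarith
      show "m / y \<le> (\<Sum>k=0..n. pk k y)" using bnd[OF y] y0 sumeq[OF y0] by (simp add: divide_right_mono)
    qed
    then show ?thesis using integral_unique[OF int_inv[OF N1]] by simp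
  qed
  have I2: "integral {1/real N..1} (\<lambda>y. \<Sum>k=0..n. pk k y) \<le> M * ln (real N)"
  proof -
    have "integral {1/real N..1} (\<lambda>y. \<Sum>k=0..n. pk k y) \<le> integral {1/real N..1} (\<lambda>y. M / y)"
    proof (rule integral_le)
      show "(\<lambda>y. M / y) integrable_on {1/real N..1}" using int_inv[OF N1] by blast
      show "(\<lambda>y. \<Sum>k=0..n. pk k y) integrable_on {1/real N..1}" by (rule intS)
      fix y assume y: "y \<in> {1/real N..1}"
      then have "1/real N \<le> y" by simp
      then have y0: "y > 0" using iN(1) by linarith
      show "(\<Sum>k=0..n. pk k y) \<le> M / y" using bnd[OF y] y0 sumeq[OF y0] by (simp add: divide_right_mono)
    qed
    then show ?thesis using integral_unique[OF int_inv[OF N1]] by simp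
  qed
  have am: "m \<le> a_sigma N \<sigma>"
  proof -
    have "m = (1 / ln (real N)) * (m * ln (real N))" using lnN by simp
    also have "\<dots> \<le> a_sigma N \<sigma>" unfolding aeq using I1 lnN by (intro mult_left_mono) auto
    finally show ?thesis .
  qed
  have aM: "a_sigma N \<sigma> \<le> M"
  proof -
    have "a_sigma N \<sigma> \<le> (1 / ln (real N)) * (M * ln (real N))" unfolding aeq using I2 lnN by (intro mult_left_mono) auto
    also have "\<dots> = M" using lnN by simp
    finally show ?thesis .
  qed
  have Sx: "m \<le> Ssum n x" "Ssum n x \<le> M" using bnd[OF assms(3)] by auto
  have "\<bar>Ssum n x - a_sigma N \<sigma>\<bar> \<le> M - m" using Sx am aM by linarith
  also have "M - m = real N - 1" by (simp add: M_def m_def)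
  also have "\<dots> \<le> real N * (real N - 1) / 2"
  proof -
    have h: "0 \<le> (real N - 2) * (real N - 1)" using N2 by (intro mult_nonneg_nonneg) auto
    then have h2: "0 \<le> real N * real N - 3 * real N + 2" by (simp add: algebra_simps)
    show ?thesis using h2 by (simp add: le_divide_eq algebra_simps)
  qed
  finally show ?thesis by (simp add: Ssum_def n_def)
qed


end
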